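(* Let $R>0$ and $N\ge 1$ an integer. Let $$f_{\mathrm{CI}}(r)=\begin{cases}\frac{4r}{\pi R^2}\cos^{-1}\!\left(\frac{r}{2R}\right)-\frac{2r^2}{\pi R^4}\sqrt{R^2-\tfrac14 r^2}, & 0\le r\le 2R,\\ 0, & r>2R,\end{cases}$$ be the density of the distance between two independent uniformly distributed points in a disk of radius $R$, and let $$\Psi(r)=\frac{1}{\pi}\Big(4\csc^{-1}\!\left(\tfrac{2R}{r}\right)+2\left(\tfrac{r}{R}\right)^2\sec^{-1}\!\left(\tfrac{2R}{r}\right)-2\tan^{-1}\!\left(\tfrac{r}{\sqrt{4R^2-r^2}}\right)-\tfrac{r(r^2+2R^2)\sqrt{4R^2-r^2}}{4R^4}\Big),\quad 0<r<2R.$$ Suppose a device has $N$ aggregators whose distances $R_1,\dots,R_N$ to the device are i.i.d. with density $f_{\mathrm{CI}}$, and the device connects to the nearest one, at distance $r=\min_i R_i$. Let $\hat P_o>0$, $P_{\max}>0$, $P_{\mathrm{CP}}\ge0$, $\eta>0$, $\epsilon\in(0,1]$, $\alpha_{\mathrm g}>0$; the transmit power is $P_T=\min\{\hat P_o r^{\epsilon\alpha_{\mathrm g}},P_{\max}\}$ and $P_{\mathrm{TX}}=P_{\mathrm{CP}}+\eta^{-1}P_T$. Then $$\mathbb{E}[P_{\mathrm{TX}}]=P_{\mathrm{CP}}+\eta^{-1}N\Big(P_{\max}\int_{\zeta_{\mathrm{CI}}}^{2R}f_{\mathrm{CI}}(r)(1-\Psi(r))^{N-1}dr+\hat P_o\int_0^{\zeta_{\mathrm{CI}}}r^{\epsilon\alpha_{\mathrm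 g}}f_{\mathrm{CI}}(r)(1-\Psi(r))^{N-1}dr\Big),$$ where $\zeta_{\mathrm{CI}}=\min\{2R,(P_{\max}/\hat P_o)^{1/(\epsilon\alpha_{\mathrm g})}\}$. Moreover, for $L_o>0$, $\mu>0$, path loss $l(r)=L_o r^{\alpha_{\mathrm g}}$ and $\hat\mu=\mu/L_o$, $$\mathbb{P}(l(r)\le\mu)=N\int_0^{\min\{\hat\mu^{1/\alpha_{\mathrm g}},2R\}}f_{\mathrm{CI}}(r)(1-\Psi(r))^{N-1}dr,$$ which for $N=1$ equals $\min\{\Psi(\min\{\hat\mu^{1/\alpha_{\mathrm g}},2R\}),1\}$.
   Context: "Cluster-interior deployment": devices are uniformly distributed in a disk of radius $R$ and $N$ terrestrial aggregators are placed uniformly at random in the same disk; each device connects to its nearest aggregator. The path loss at distance $r$ is $L_o r^{\alpha_{\mathrm g}}$. Devices use fractional power control with factor $\epsilon$, open-loop constant $\hat P_o$ and maximum transmit power $P_{\max}$; $P_{\mathrm{CP}}$ is the circuit power and $\eta$ the power amplifier efficiency. The IoT coverage at maximum coupling loss $\mu$ (linear) is the probability that the path loss is at most $\mu$. *)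

theory Defs
  imports "HOL-Probability.Probability"
begin

definition arccsc :: "real \<Rightarrow> real" where "arccsc x = arcsin (1 / x)"
definition arcsec :: "real \<Rightarrow> real" where "arcsec x = arccos (1 / x)"

definition f_CI :: "real \<Rightarrow> real \<Rightarrow> real" where
  "f_CI R r = (if 0 \<le> r \<and> r \<le> 2 * R then
      4 * r / (pi * R^2) * arccos (r / (2 * R))
      - 2 * r^2 / (pi * R^4) * sqrt (R^2 - r^2 / 4)
    else 0)"

text \<open>The function Psi of the paper on 0 < r < 2R; extended by 0 for r <= 0 and by its limit
  value 1 for r >= 2R.\<close>
definition Psi_CI :: "real \<Rightarrow> real \<Rightarrow> real" where
  "Psi_CI R r = (if r \<le> 0 then 0 else if r \<ge> 2 * R then 1 else
      (1 / pi) * (4 * arccsc (2 * R / r) + 2 * (r / R)^2 * arcsec (2 * R / r)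
        - 2 * arctan (r / sqrt (4 * R^2 - r^2))
        - r * (r^2 + 2 * R^2) * sqrt (4 * R^2 - r^2) / (4 * R^4)))"

end

theory Submission
  imports Defs
begin

definition GG :: "real \<Rightarrow> real \<Rightarrow> real" where
  "GG R r = (1/pi) * (2* arcsin(r/(2*R)) + 2*(r/R)^2* arccos(r/(2*R))
      - r*(r^2+2*R^2)* sqrt(4*R^2-r^2)/(4*R^4))"

definition fe :: "real \<Rightarrow> real \<Rightarrow> real" where
  "fe R r = 4 * r / (pi * R^2) * arccos (r / (2 * R))
      - 2 * r^2 / (pi * R^4) * sqrt (R^2 - r^2 / 4)"

lemma Psi_eq_GG:
  assumes R: "R > 0" and r: "0 < r" "r < 2*R"
  shows "Psi_CI R r = GG R r"
proof -
  have x: "-1 < r/(2*R)" "r/(2*R) < 1" using R r by (auto simp: field_simps)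
  have s: "sqrt (4*R^2-r^2) = 2*R * sqrt(1-(r/(2*R))^2)"
  proof -
    have "4*R^2-r^2 = (2*R)^2 * (1-(r/(2*R))^2)" using R by (simp add: field_simps power2_eq_square)
    then show ?thesis using R by (simp add: real_sqrt_mult)
  qed
  have "r / sqrt (4*R^2-r^2) = (r/(2*R)) / sqrt(1-(r/(2*R))^2)" using R by (simp add: s)
  then have at: "arctan (r / sqrt (4*R^2-r^2)) = arcsin (r/(2*R))"
    using arcsin_arctan[OF x] by (simp only:)
  have "1 / (2*R/r) = r/(2*R)" by simp
  then show ?thesis using r R unfolding Psi_CI_def GG_def arccsc_def arcsec_def at
    by (simp add: algebra_simps)
qed

lemma GG_0: "GG R 0 = 0" by (simp add: GG_def)
lemma GG_2R: "R > 0 \<Longrightarrow> GG R (2*R) = 1"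
  by (simp add: GG_def power2_eq_square)

lemma GG_deriv:
  assumes R: "R > 0" and r: "0 < r" "r < 2*R"
  shows "(GG R has_real_derivative fe R r) (at r)"
proof -
  have x: "-1 < r/(2*R)" "r/(2*R) < 1" using R r by (auto simp: field_simps)
  have "r^2 < (2*R)^2" using r by (intro power_strict_mono) auto
  then have p: "4*R^2-r^2 > 0" by (simp add: power_mult_distrib)
  define s where "s = sqrt (4*R^2-r^2)"
  have s0: "s > 0" using p s_def by simp
  have ss: "s^2 = 4*R^2-r^2" using p s_def by simp
  have s1: "sqrt (1-(r/(2*R))^2) = s/(2*R)"
  proof -
    have "1-(r/(2*R))^2 = (s/(2*R))^2" using R ss by (simp add: field_simps power2_eq_square)
    then show ?thesis using R s0 by simp
  qed
  have s2: "sqrt (R^2 - r^2/4) = s/2"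
  proof -
    have "R^2 - r^2/4 = (s/2)^2" using R ss by (simp add: field_simps power2_eq_square)
    then show ?thesis using R s0 by simp
  qed
  have dx: "((\<lambda>r. r/(2*R)) has_real_derivative 1/(2*R)) (at r)"
    using DERIV_cdivide[OF DERIV_ident, of "2*R"] by simp
  have d1: "((\<lambda>r. arcsin(r/(2*R))) has_real_derivative 1/s) (at r)"
    using DERIV_chain2[OF DERIV_arcsin[OF x] dx] s1 R s0 by (simp add: field_simps)
  have d2: "((\<lambda>r. arccos(r/(2*R))) has_real_derivative -1/s) (at r)"
    using DERIV_chain2[OF DERIV_arccos[OF x] dx] s1 R s0 by (simp add: field_simps)
  have dq: "((\<lambda>r. 4*R^2-r^2) has_real_derivative -2*r) (at r)"
    using DERIV_diff[OF DERIV_const[of "4*R^2"] DERIV_pow[of 2 r]] by simp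
  have d3: "((\<lambda>r. sqrt(4*R^2-r^2)) has_real_derivative -r/s) (at r)"
    using DERIV_chain2[OF DERIV_real_sqrt[OF p] dq] s_def s0 by (simp add: field_simps)
  have t1: "((\<lambda>r. 2*arcsin(r/(2*R))) has_real_derivative 2*(1/s)) (at r)"
    by (rule DERIV_cmult[OF d1])
  have dsq: "((\<lambda>r. 2*(r/R)^2) has_real_derivative 2*(2*r/R^2)) (at r)"
  proof -
    have "(\<lambda>r. 2*(r/R)^2) = (\<lambda>r. (2/R^2) * r^2)" by (auto simp: power_divide)
    then show ?thesis using DERIV_cmult[OF DERIV_pow[of 2 r], of "2/R^2"] by simp
  qed
  have t2: "((\<lambda>r. 2*(r/R)^2 * arccos(r/(2*R))) has_real_derivative
      2*(2*r/R^2) * arccos(r/(2*R)) + (-1/s) * (2*(r/R)^2)) (at r)"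
    by (rule DERIV_mult[OF dsq d2])
  have dp: "((\<lambda>r. r*(r^2+2*R^2)) has_real_derivative 3*r^2+2*R^2) (at r)"
  proof -
    have "(\<lambda>r. r*(r^2+2*R^2)) = (\<lambda>r. r^3 + (2*R^2) * r)" by (auto simp: algebra_simps power2_eq_square power3_eq_cube)
    then show ?thesis using DERIV_add[OF DERIV_pow[of 3 r] DERIV_cmult[OF DERIV_ident, of "2*R^2"]] by simp
  qed
  have t3: "((\<lambda>r. r*(r^2+2*R^2) * sqrt(4*R^2-r^2)/(4*R^4)) has_real_derivative
      ((3*r^2+2*R^2) * sqrt(4*R^2-r^2) + (-r/s) * (r*(r^2+2*R^2)))/(4*R^4)) (at r)"
    by (rule DERIV_cdivide[OF DERIV_mult[OF dp d3]])
  have e: "((\<lambda>r. (1/pi) * (2*arcsin(r/(2*R)) + 2*(r/R)^2 * arccos(r/(2*R)) - r*(r^2+2*R^2) * sqrt(4*R^2-r^2)/(4*R^4)))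
     has_real_derivative (1/pi) * (2*(1/s) + (2*(2*r/R^2) * arccos(r/(2*R)) + (-1/s) * (2*(r/R)^2))
        - ((3*r^2+2*R^2) * sqrt(4*R^2-r^2) + (-r/s) * (r*(r^2+2*R^2)))/(4*R^4))) (at r)"
    by (rule DERIV_cmult[OF DERIV_diff[OF DERIV_add[OF t1 t2] t3]])
  have eq0: "(2*(1/s) + (-1/s) * (2*(r/R)^2)
        - ((3*r^2+2*R^2) * s + (-r/s) * (r*(r^2+2*R^2)))/(4*R^4)) = -(r^2 * s / R^4)"
      using R s0 ss by (simp add: field_simps) algebra
  have eq: "(1/pi) * (2*(1/s) + (2*(2*r/R^2) * arccos(r/(2*R)) + (-1/s) * (2*(r/R)^2))
        - ((3*r^2+2*R^2) * s + (-r/s) * (r*(r^2+2*R^2)))/(4*R^4)) = fe R r"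
  proof -
    have "(1/pi) * (2*(1/s) + (2*(2*r/R^2) * arccos(r/(2*R)) + (-1/s) * (2*(r/R)^2))
        - ((3*r^2+2*R^2) * s + (-r/s) * (r*(r^2+2*R^2)))/(4*R^4))
       = (1/pi) * (2*(2*r/R^2) * arccos(r/(2*R)) + (2*(1/s) + (-1/s) * (2*(r/R)^2)
        - ((3*r^2+2*R^2) * s + (-r/s) * (r*(r^2+2*R^2)))/(4*R^4)))" by (simp add: algebra_simps)
    also have "... = (1/pi) * (2*(2*r/R^2) * arccos(r/(2*R)) - (r^2 * s / R^4))" unfolding eq0 by simp
    also have "... = fe R r" unfolding fe_def s2 by (simp add: field_simps)
    finally show ?thesis .
  qed
  show ?thesis unfolding GG_def[abs_def] using e eq unfolding s_def[symmetric] by simp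
qed

lemma pw_cont:
  fixes g :: "real \<Rightarrow> real"
  assumes ab: "a \<le> b" and g: "continuous_on {a..b} g" and ga: "g a = c1" and gb: "g b = c2"
  shows "isCont (\<lambda>x. if x \<le> a then c1 else if x \<ge> b then c2 else g x) x"
proof -
  let ?p = "\<lambda>x. if x \<le> a then c1 else if x \<ge> b then c2 else g x"
  have c1: "continuous_on {..a} ?p"
    by (rule continuous_on_cong[THEN iffD1, OF refl _ continuous_on_const[of _ c1]]) auto
  have c2: "continuous_on {a..b} ?p"
    by (rule continuous_on_cong[THEN iffD1, OF refl _ g]) (use ga gb in auto)
  have c3: "continuous_on {b..} ?p"
    apply (rule continuous_on_cong[THEN iffD1, OF refl _ continuous_on_const[of _ c2]])
    using ab ga gb by (auto, metis order_antisym order_trans)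
  have "continuous_on ({..a} \<union> {a..b} \<union> {b..}) ?p"
    by (intro continuous_on_closed_Un c1 c2 c3) auto
  moreover have "{..a} \<union> {a..b} \<union> {b..} = (UNIV::real set)" using ab by auto
  ultimately show ?thesis by (simp add: continuous_on_eq_continuous_at)
qed

lemma fe_cont: "R > 0 \<Longrightarrow> continuous_on {0..2*R} (fe R)"
  unfolding fe_def[abs_def] by (intro continuous_intros) (auto simp: field_simps)

lemma GG_cont: "R > 0 \<Longrightarrow> continuous_on {0..2*R} (GG R)"
  unfolding GG_def[abs_def] by (intro continuous_intros) (auto simp: field_simps)

lemma fe_0: "fe R 0 = 0" by (simp add: fe_def)
lemma fe_2R: "R > 0 \<Longrightarrow> fe R (2*R) = 0" by (simp add: fe_def power2_eq_square)

lemma f_CI_pw: "R > 0 \<Longrightarrow> f_CI R = (\<lambda>x. if x \<le> 0 then 0 else if x \<ge> 2*R then 0 else fe R x)"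
  using fe_2R[of R] fe_0[of R] by (auto simp: f_CI_def fe_def fun_eq_iff)

lemma Psi_pw: "R > 0 \<Longrightarrow> Psi_CI R = (\<lambda>x. if x \<le> 0 then 0 else if x \<ge> 2*R then 1 else GG R x)"
  by (auto simp: fun_eq_iff Psi_eq_GG) (auto simp: Psi_CI_def)

lemma f_CI_cont: "R > 0 \<Longrightarrow> isCont (f_CI R) x"
  unfolding f_CI_pw by (rule pw_cont) (auto simp: fe_cont fe_0 fe_2R)

lemma Psi_cont: "R > 0 \<Longrightarrow> isCont (Psi_CI R) x"
  unfolding Psi_pw by (rule pw_cont) (auto simp: GG_cont GG_0 GG_2R)

lemma fe_nonneg:
  assumes R: "R > 0" and r: "0 \<le> r" "r \<le> 2*R"
  shows "fe R r \<ge> 0"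
proof -
  define u where "u = r/(2*R)"
  have u: "0 \<le> u" "u \<le> 1" using R r by (auto simp: u_def field_simps)
  define t where "t = arccos u"
  have t: "0 \<le> t" "cos t = u" "sin t = sqrt(1-u^2)" using u by (auto simp: t_def sin_arccos arccos_lbound)
  have "sin (2*t) \<le> 2*t" using t by (intro sin_x_le_x) auto
  then have key: "u * sqrt(1-u^2) \<le> t" using t sin_double[of t] by (simp add: mult.commute)
  have sq: "sqrt (R^2 - r^2/4) = R * sqrt(1-u^2)"
  proof -
    have "R^2 - r^2/4 = R^2 * (1-u^2)" using R by (simp add: u_def field_simps power2_eq_square)
    then show ?thesis using R by (simp add: real_sqrt_mult)
  qed
  have "fe R r = 4*r/(pi*R^2) * (t - u * sqrt(1-u^2))"
    unfolding fe_def sq t_def[symmetric] u_def[symmetric] using R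
    by (simp add: u_def field_simps power2_eq_square eval_nat_numeral)
  moreover have "4*r/(pi*R^2) \<ge> 0" using r R by simp
  ultimately show ?thesis using key by (metis diff_ge_0_iff_ge mult_nonneg_nonneg)
qed

lemma ftc_gen:
  fixes Phi phi :: "real \<Rightarrow> real"
  assumes Phi_cont: "\<And>x. isCont Phi x" and phi_cont: "\<And>x. isCont phi x"
    and der: "\<And>x. 0 < x \<Longrightarrow> x < c \<Longrightarrow> (Phi has_real_derivative phi x) (at x)"
    and ab: "0 \<le> a" "a \<le> b" "b \<le> c"
  shows "(phi has_integral Phi b - Phi a) {a..b}" "(LBINT x=a..b. phi x) = Phi b - Phi a"
proof -
  show hi: "(phi has_integral Phi b - Phi a) {a..b}"
  proof (rule fundamental_theorem_of_calculus_interior)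
    show "a \<le> b" by fact
    show "continuous_on {a..b} Phi" using Phi_cont by (intro continuous_at_imp_continuous_on) auto
    fix x assume "x \<in> {a<..<b}"
    then show "(Phi has_vector_derivative phi x) (at x)"
      using der[of x] ab by (auto simp: has_real_derivative_iff_has_vector_derivative[symmetric])
  qed
  have "set_integrable lborel {a..b} phi"
    using phi_cont by (intro borel_integrable_atLeastAtMost' continuous_at_imp_continuous_on) auto
  then show "(LBINT x=a..b. phi x) = Phi b - Phi a"
    using interval_integral_eq_integral[of a b phi] ab hi by (simp add: integral_unique)
qed

lemma nn_gen:
  fixes Phi phi :: "real \<Rightarrow> real"
  assumes Phi_cont: "\<And>x. isCont Phi x" and phi_cont: "\<And>x. isCont phi x"
    and der: "\<And>x. 0 < x \<Longrightarrow> x < c \<Longrightarrow> (Phi has_real_derivative phi x) (at x)"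
    and c: "0 \<le> c" and nn: "\<And>x. phi x \<ge> 0" and out: "\<And>x. x < 0 \<or> x > c \<Longrightarrow> phi x = 0"
  shows "(\<integral>\<^sup>+x. ennreal (phi x) * indicator {..t} x \<partial>lborel) = ennreal (Phi (max 0 (min t c)) - Phi 0)"
proof (cases "t < 0")
  case True
  have z: "\<And>x. ennreal (phi x) * indicator {..t} x = 0"
    using True out by (auto simp: indicator_def)
  have "(\<integral>\<^sup>+x. ennreal (phi x) * indicator {..t} x \<partial>lborel) = (\<integral>\<^sup>+(x::real). 0 \<partial>lborel)"
    by (intro nn_integral_cong) (rule z)
  then show ?thesis using True by simp
next
  case False
  define d where "d = min t c"
  have d: "0 \<le> d" "d \<le> c" using False c by (auto simp: d_def)
  have z: "\<And>x. ennreal (phi x) * indicator {..t} x = ennreal (phi x) * indicator {0..d} x"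
    using out[of] False by (auto simp: indicator_def d_def not_less)
  have "(\<integral>\<^sup>+x. ennreal (phi x) * indicator {..t} x \<partial>lborel)
      = (\<integral>\<^sup>+x. ennreal (phi x) * indicator {0..d} x \<partial>lborel)" by (intro nn_integral_cong) (rule z)
  also have "... = ennreal (Phi d - Phi 0)"
    by (rule nn_integral_has_integral_lebesgue'[OF _ ftc_gen(1)[OF Phi_cont phi_cont der]])
       (use nn d in auto)
  finally show ?thesis using False c by (simp add: d_def)
qed

lemma F_deriv:
  assumes R: "R > 0" and x: "0 < x" "x < 2*R"
  shows "(Psi_CI R has_real_derivative f_CI R x) (at x)"
proof -
  have "(GG R has_real_derivative fe R x) (at x)" using GG_deriv[OF R x] .
  then have "(Psi_CI R has_real_derivative fe R x) (at x)"
    by (rule has_field_derivative_transform_within_open[where S="{0<..<2*R}"])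
       (use x R in \<open>auto simp: Psi_eq_GG\<close>)
  moreover have "f_CI R x = fe R x" using x by (simp add: f_CI_def fe_def)
  ultimately show ?thesis by simp
qed

lemma f_nn: "R > 0 \<Longrightarrow> f_CI R x \<ge> 0"
  using fe_nonneg[of R x] by (auto simp: f_CI_def fe_def)

lemma f_out: "x < 0 \<or> x > 2*R \<Longrightarrow> f_CI R x = 0"
  by (auto simp: f_CI_def)

lemma F_int:
  assumes "R > 0" "0 \<le> a" "a \<le> b" "b \<le> 2*R"
  shows "(f_CI R has_integral Psi_CI R b - Psi_CI R a) {a..b}"
    "(LBINT x=a..b. f_CI R x) = Psi_CI R b - Psi_CI R a"
  using ftc_gen[of "Psi_CI R" "f_CI R" "2*R" a b] assms Psi_cont f_CI_cont F_deriv by auto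

lemma F_0: "Psi_CI R 0 = 0" by (simp add: Psi_CI_def)
lemma F_2R: "R > 0 \<Longrightarrow> Psi_CI R (2*R) = 1" by (simp add: Psi_CI_def)

lemma F_bounds:
  assumes R: "R > 0"
  shows "0 \<le> Psi_CI R x" "Psi_CI R x \<le> 1"
proof -
  have "0 \<le> Psi_CI R x \<and> Psi_CI R x \<le> 1"
  proof (cases "0 \<le> x \<and> x \<le> 2*R")
    case True
    have "0 \<le> Psi_CI R x - Psi_CI R 0"
      by (rule has_integral_nonneg[OF F_int(1)[OF R]]) (use True f_nn R in auto)
    moreover have "0 \<le> Psi_CI R (2*R) - Psi_CI R x"
      by (rule has_integral_nonneg[OF F_int(1)[OF R]]) (use True f_nn R in auto)
    ultimately show ?thesis using R by (simp add: F_0 F_2R)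
  next
    case False
    then show ?thesis by (auto simp: Psi_CI_def)
  qed
  then show "0 \<le> Psi_CI R x" "Psi_CI R x \<le> 1" by auto
qed

lemma F_clamp: "R > 0 \<Longrightarrow> Psi_CI R (max 0 (min t (2*R))) = Psi_CI R t"
  by (auto simp: Psi_CI_def max_def min_def)

definition HH :: "nat \<Rightarrow> real \<Rightarrow> real \<Rightarrow> real" where
  "HH N R x = 1 - (1 - Psi_CI R x)^N"
definition hh :: "nat \<Rightarrow> real \<Rightarrow> real \<Rightarrow> real" where
  "hh N R x = real N * f_CI R x * (1 - Psi_CI R x)^(N-1)"

lemma H_deriv:
  assumes R: "R > 0" and x: "0 < x" "x < 2*R"
  shows "(HH N R has_real_derivative hh N R x) (at x)"
proof -
  have "((\<lambda>x. 1 - Psi_CI R x) has_real_derivative 0 - f_CI R x) (at x)"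
    by (rule DERIV_diff[OF DERIV_const F_deriv[OF R x]])
  from DERIV_chain2[OF DERIV_pow this, of N]
  have "((\<lambda>x. (1 - Psi_CI R x)^N) has_real_derivative real N * (1 - Psi_CI R x)^(N - Suc 0) * (0 - f_CI R x)) (at x)" .
  from DERIV_diff[OF DERIV_const[of 1] this]
  show ?thesis unfolding HH_def[abs_def] hh_def by (simp add: algebra_simps)
qed

lemma H_cont: "R > 0 \<Longrightarrow> isCont (HH N R) x"
  unfolding HH_def[abs_def] by (intro continuous_intros Psi_cont)

lemma h_cont: "R > 0 \<Longrightarrow> isCont (hh N R) x"
  unfolding hh_def[abs_def] by (intro continuous_intros Psi_cont f_CI_cont)

lemma h_nn: "R > 0 \<Longrightarrow> hh N R x \<ge> 0"
  unfolding hh_def using f_nn[of R x] F_bounds[of R x] by simp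

lemma h_out: "x < 0 \<or> x > 2*R \<Longrightarrow> hh N R x = 0"
  unfolding hh_def using f_out by simp

lemma H_0: "HH N R 0 = 0" by (simp add: HH_def F_0)
lemma H_2R: "R > 0 \<Longrightarrow> N \<ge> 1 \<Longrightarrow> HH N R (2*R) = 1" by (simp add: HH_def F_2R)

lemma H_int:
  assumes "R > 0" "0 \<le> a" "a \<le> b" "b \<le> 2*R"
  shows "(hh N R has_integral HH N R b - HH N R a) {a..b}"
    "(LBINT x=a..b. hh N R x) = HH N R b - HH N R a"
  using ftc_gen[of "HH N R" "hh N R" "2*R" a b] assms H_cont h_cont H_deriv by auto

lemma H_nn:
  assumes "R > 0"
  shows "(\<integral>\<^sup>+x. ennreal (hh N R x) * indicator {..t} x \<partial>lborel) = ennreal (HH N R t)"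
proof -
  have "(\<integral>\<^sup>+x. ennreal (hh N R x) * indicator {..t} x \<partial>lborel)
      = ennreal (HH N R (max 0 (min t (2*R))) - HH N R 0)"
    by (rule nn_gen[OF H_cont h_cont H_deriv]) (use assms h_nn h_out in auto)
  then show ?thesis using F_clamp[OF assms] by (simp add: HH_def F_0)
qed

lemma F_nn:
  assumes "R > 0"
  shows "(\<integral>\<^sup>+x. ennreal (f_CI R x) * indicator {..t} x \<partial>lborel) = ennreal (Psi_CI R t)"
proof -
  have "(\<integral>\<^sup>+x. ennreal (f_CI R x) * indicator {..t} x \<partial>lborel)
      = ennreal (Psi_CI R (max 0 (min t (2*R))) - Psi_CI R 0)"
    by (rule nn_gen[OF Psi_cont f_CI_cont F_deriv]) (use assms f_nn f_out in auto)
  then show ?thesis using F_clamp[OF assms] by (simp add: F_0)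
qed

lemma f_meas: "R > 0 \<Longrightarrow> f_CI R \<in> borel_measurable borel"
  by (intro borel_measurable_continuous_onI continuous_at_imp_continuous_on) (auto intro: f_CI_cont)
lemma F_meas: "R > 0 \<Longrightarrow> Psi_CI R \<in> borel_measurable borel"
  by (intro borel_measurable_continuous_onI continuous_at_imp_continuous_on) (auto intro: Psi_cont)
lemma h_meas: "R > 0 \<Longrightarrow> hh N R \<in> borel_measurable borel"
  by (intro borel_measurable_continuous_onI continuous_at_imp_continuous_on) (auto intro: h_cont)

lemma prob_le_F:
  assumes P: "prob_space M" and R: "R > 0" and D: "distributed M lborel X (\<lambda>x. ennreal (f_CI R x))"
  shows "measure M {x\<in>space M. X x \<le> t} = Psi_CI R t"
proof -
  interpret prob_space M by fact
  have Xm: "X \<in> measurable M lborel" using distributed_measurable[OF D] .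
  have "emeasure M {x\<in>space M. X x \<le> t} = emeasure (distr M lborel X) {..t}"
    by (subst emeasure_distr[OF Xm]) (auto intro!: arg_cong2[where f=emeasure])
  also have "... = emeasure (density lborel (\<lambda>x. ennreal (f_CI R x))) {..t}"
    unfolding distributed_distr_eq_density[OF D] ..
  also have "... = (\<integral>\<^sup>+x. ennreal (f_CI R x) * indicator {..t} x \<partial>lborel)"
    by (rule emeasure_density) (use f_meas[OF R] in auto)
  also have "... = ennreal (Psi_CI R t)" by (rule F_nn[OF R])
  finally show ?thesis using F_bounds[OF R, of t] by (simp add: measure_def)
qed

lemma prob_min_gt:
  assumes P: "prob_space M" and R: "R > 0" and N: "N \<ge> 1"
    and I: "prob_space.indep_vars M (\<lambda>_. borel) Rs {..<N}"
    and D: "\<forall>i<N. distributed M lborel (Rs i) (\<lambda>x. ennreal (f_CI R x))"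
  shows "measure M {x\<in>space M. t < Min ((\<lambda>i. Rs i x) ` {..<N})} = (1 - Psi_CI R t)^N"
proof -
  interpret prob_space M by fact
  have Rm: "Rs i \<in> borel_measurable M" if "i < N" for i
    using distributed_measurable[of M lborel "Rs i"] D that by auto
  have ne: "{..<N} \<noteq> {}" using N by (simp add: lessThan_empty_iff)
  have eq: "{x\<in>space M. t < Min ((\<lambda>i. Rs i x) ` {..<N})} = (\<Inter>i\<in>{..<N}. Rs i -` {t<..} \<inter> space M)"
    using ne by auto
  have "prob (\<Inter>i\<in>{..<N}. Rs i -` {t<..} \<inter> space M) = (\<Prod>i\<in>{..<N}. prob (Rs i -` {t<..} \<inter> space M))"
  proof (rule indep_setsD)
    show "indep_sets (\<lambda>i. sigma_sets (space M) { Rs i -` A \<inter> space M | A. A \<in> sets ((\<lambda>_. borel) i)}) {..<N}"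
      using I unfolding indep_vars_def by blast
    show "\<forall>j\<in>{..<N}. Rs j -` {t<..} \<inter> space M \<in> sigma_sets (space M) { Rs j -` A \<inter> space M | A. A \<in> sets ((\<lambda>_. borel) j)}"
      by (auto intro!: sigma_sets.Basic exI[of _ "{t<..}"])
  qed (use ne in auto)
  also have "... = (\<Prod>i\<in>{..<N}. 1 - Psi_CI R t)"
  proof (rule prod.cong[OF refl])
    fix i assume i: "i \<in> {..<N}"
    have Ri[measurable]: "Rs i \<in> borel_measurable M" using Rm i by simp
    have ev: "{x\<in>space M. Rs i x \<le> t} \<in> events" by measurable
    have "Rs i -` {t<..} \<inter> space M = space M - {x\<in>space M. Rs i x \<le> t}" by auto
    then have "prob (Rs i -` {t<..} \<inter> space M) = 1 - prob {x\<in>space M. Rs i x \<le> t}"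
      using finite_measure_compl[OF ev] by (simp add: prob_space)
    also have "... = 1 - Psi_CI R t" using prob_le_F[OF P R, of "Rs i" t] D i by auto
    finally show "prob (Rs i -` {t<..} \<inter> space M) = 1 - Psi_CI R t" .
  qed
  finally show ?thesis unfolding eq by simp
qed

lemma H_nonneg: "R > 0 \<Longrightarrow> HH N R t \<ge> 0"
  unfolding HH_def using F_bounds[of R t] by (simp add: power_le_one)

lemma distr_min:
  assumes P: "prob_space M" and R: "R > 0" and N: "N \<ge> 1"
    and I: "prob_space.indep_vars M (\<lambda>_. borel) Rs {..<N}"
    and D: "\<forall>i<N. distributed M lborel (Rs i) (\<lambda>x. ennreal (f_CI R x))"
  shows "distr M borel (\<lambda>x. Min ((\<lambda>i. Rs i x) ` {..<N})) = density lborel (\<lambda>x. ennreal (hh N R x))"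
proof -
  interpret prob_space M by fact
  have Rm: "Rs i \<in> borel_measurable M" if "i < N" for i
    using distributed_measurable[of M lborel "Rs i"] D that by auto
  let ?m = "\<lambda>x. Min ((\<lambda>i. Rs i x) ` {..<N})"
  have mm[measurable]: "?m \<in> borel_measurable M"
    by (rule borel_measurable_Min) (use Rm in auto)
  have RD1: "real_distribution (distr M borel ?m)" by (rule real_distribution_distr) simp
  have hm[measurable]: "hh N R \<in> borel_measurable borel" by (rule h_meas[OF R])
  have tot: "(\<integral>\<^sup>+x. ennreal (hh N R x) \<partial>lborel) = 1"
  proof -
    have "(\<integral>\<^sup>+x. ennreal (hh N R x) \<partial>lborel) = (\<integral>\<^sup>+x. ennreal (hh N R x) * indicator {..2*R} x \<partial>lborel)"
      by (intro nn_integral_cong) (auto simp: indicator_def h_out)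
    also have "... = ennreal (HH N R (2*R))" by (rule H_nn[OF R])
    finally show ?thesis using H_2R[OF R N] by simp
  qed
  have RD2: "real_distribution (density lborel (\<lambda>x. ennreal (hh N R x)))"
    unfolding real_distribution_def real_distribution_axioms_def
  proof (intro conjI)
    show "prob_space (density lborel (\<lambda>x. ennreal (hh N R x)))"
    proof (rule prob_spaceI)
      show "emeasure (density lborel (\<lambda>x. ennreal (hh N R x))) (space (density lborel (\<lambda>x. ennreal (hh N R x)))) = 1"
        using tot by (subst emeasure_density) auto
    qed
  qed simp
  have "cdf (distr M borel ?m) = cdf (density lborel (\<lambda>x. ennreal (hh N R x)))"
  proof
    fix t
    have e1: "{x\<in>space M. ?m x \<le> t} = space M - {x\<in>space M. t < ?m x}" by auto
    have "cdf (distr M borel ?m) t = prob (?m -` {..t} \<inter> space M)"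
      unfolding cdf_def by (rule measure_distr) auto
    also have "... = prob (space M - {x\<in>space M. t < ?m x})"
      by (intro arg_cong[where f=prob]) auto
    also have "... = 1 - (1 - Psi_CI R t)^N"
      using finite_measure_compl[of "{x\<in>space M. t < ?m x}"] prob_min_gt[OF P R N I D, of t]
      by (simp add: prob_space)
    also have "... = HH N R t" by (simp add: HH_def)
    finally have c1: "cdf (distr M borel ?m) t = HH N R t" .
    have "cdf (density lborel (\<lambda>x. ennreal (hh N R x))) t
       = enn2real (\<integral>\<^sup>+x. ennreal (hh N R x) * indicator {..t} x \<partial>lborel)"
      unfolding cdf_def measure_def by (subst emeasure_density) auto
    also have "... = HH N R t" using H_nn[OF R, of N t] H_nonneg[OF R, of N t] by simp
    finally show "cdf (distr M borel ?m) t = cdf (density lborel (\<lambda>x. ennreal (hh N R x))) t"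
      using c1 by simp
  qed
  then show ?thesis by (rule cdf_unique[OF RD1 RD2])
qed

lemma powr_le_iff_root:
  fixes r a y :: real
  assumes "0 \<le> r" "0 < a" "0 \<le> y"
  shows "r powr a \<le> y \<longleftrightarrow> r \<le> y powr (1/a)"
proof
  assume h: "r powr a \<le> y"
  have "(r powr a) powr (1/a) \<le> y powr (1/a)" using h assms by (intro powr_mono2) auto
  moreover have "(r powr a) powr (1/a) = r" using assms by (simp add: powr_powr powr_one)
  ultimately show "r \<le> y powr (1/a)" by simp
next
  assume h: "r \<le> y powr (1/a)"
  have "r powr a \<le> (y powr (1/a)) powr a" using h assms by (intro powr_mono2) auto
  moreover have "(y powr (1/a)) powr a = y" using assms by (simp add: powr_powr powr_one)
  ultimately show "r powr a \<le> y" by simp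
qed

theorem theorem2:
  fixes M :: "'a measure" and Rs :: "nat \<Rightarrow> 'a \<Rightarrow> real" and N :: nat
    and R Po Pmax Pcp \<eta> \<epsilon> \<alpha>g Lo \<mu> :: real
  assumes "prob_space M"
    and "R > 0" and "N \<ge> 1"
    and "prob_space.indep_vars M (\<lambda>_. borel) Rs {..<N}"
    and "\<forall>i<N. distributed M lborel (Rs i) (\<lambda>x. ennreal (f_CI R x))"
    and "Po > 0" and "Pmax > 0" and "Pcp \<ge> 0" and "\<eta> > 0"
    and "0 < \<epsilon>" and "\<epsilon> \<le> 1" and "\<alpha>g > 0"
    and "Lo > 0" and "\<mu> > 0"
  shows "let rmin = (\<lambda>x. Min ((\<lambda>i. Rs i x) ` {..<N}));
             PT = (\<lambda>x. min (Po * rmin x powr (\<epsilon> * \<alpha>g)) Pmax);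
             PTX = (\<lambda>x. Pcp + PT x / \<eta>);
             \<zeta> = min (2 * R) ((Pmax / Po) powr (1 / (\<epsilon> * \<alpha>g)));
             \<mu>h = \<mu> / Lo;
             b = min (\<mu>h powr (1 / \<alpha>g)) (2 * R);
             cov = measure M {x \<in> space M. Lo * rmin x powr \<alpha>g \<le> \<mu>}
         in (\<integral>x. PTX x \<partial>M) =
              Pcp + (1 / \<eta>) * real N *
                (Pmax * (LBINT r=\<zeta>..2 * R. f_CI R r * (1 - Psi_CI R r) ^ (N - 1))
                 + Po * (LBINT r=0..\<zeta>. r powr (\<epsilon> * \<alpha>g) * f_CI R r * (1 - Psi_CI R r) ^ (N - 1)))
          \<and> cov = real N * (LBINT r=0..b. f_CI R r * (1 - Psi_CI R r) ^ (N - 1))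
          \<and> (N = 1 \<longrightarrow> cov = min (Psi_CI R b) 1)"
proof -
  interpret prob_space M by fact
  note P = assms(1) and R = assms(2) and N = assms(3) and I = assms(4) and D = assms(5)
  define m where "m = (\<lambda>x. Min ((\<lambda>i. Rs i x) ` {..<N}))"
  define c where "c = \<epsilon> * \<alpha>g"
  have c: "c > 0" using assms by (simp add: c_def)
  define \<phi> where "\<phi> = (\<lambda>r::real. min (Po * r powr c) Pmax)"
  define \<zeta> where "\<zeta> = min (2 * R) ((Pmax / Po) powr (1 / c))"
  define b where "b = min ((\<mu> / Lo) powr (1 / \<alpha>g)) (2 * R)"
  define cov where "cov = measure M {x \<in> space M. Lo * m x powr \<alpha>g \<le> \<mu>}"
  define g where "g = (\<lambda>r. f_CI R r * (1 - Psi_CI R r) ^ (N - 1))"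
  have hg: "\<And>r. hh N R r = real N * g r" by (simp add: hh_def g_def)
  have Rm: "Rs i \<in> borel_measurable M" if "i < N" for i
    using distributed_measurable[of M lborel "Rs i"] D that by auto
  have mm[measurable]: "m \<in> borel_measurable M"
    unfolding m_def by (rule borel_measurable_Min) (use Rm in auto)
  have dm: "distr M borel m = density lborel (\<lambda>x. ennreal (hh N R x))"
    unfolding m_def by (rule distr_min[OF P R N I D])
  have hm[measurable]: "hh N R \<in> borel_measurable borel" by (rule h_meas[OF R])
  have \<phi>m[measurable]: "\<phi> \<in> borel_measurable borel" unfolding \<phi>_def by measurable
  have \<phi>b: "\<And>r. norm (\<phi> r) \<le> Pmax"
    unfolding \<phi>_def using assms by auto
  have b: "0 \<le> b" "b \<le> 2*R" using R by (auto simp: b_def)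
  have \<zeta>: "0 \<le> \<zeta>" "\<zeta> \<le> 2*R" using R by (auto simp: \<zeta>_def)

  have intM: "integrable M (\<lambda>x. \<phi> (m x))"
    by (rule integrable_const_bound[of _ Pmax]) (use \<phi>b in auto)
  define k where "k = (\<lambda>r. hh N R r * \<phi> r)"
  have km[measurable]: "k \<in> borel_measurable borel" unfolding k_def by measurable
  have intk: "integrable lborel k"
  proof -
    have "integrable (distr M borel m) \<phi>" using intM by (subst integrable_distr_eq) auto
    then have "integrable (density lborel (\<lambda>x. ennreal (hh N R x))) \<phi>" by (simp only: dm)
    then show ?thesis unfolding k_def using h_nn[OF R]
      by (subst (asm) integrable_density) auto
  qed
  have sik: "set_integrable lborel A k" if "A \<in> sets borel" for A
    unfolding set_integrable_def using that intk by (intro integrable_mult_indicator) auto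
  have E0: "(\<integral>x. \<phi> (m x) \<partial>M) = (LINT r|lborel. k r)"
  proof -
    have "(\<integral>x. \<phi> (m x) \<partial>M) = (\<integral>r. \<phi> r \<partial>distr M borel m)"
      by (rule integral_distr[symmetric]) auto
    also have "... = (\<integral>r. \<phi> r \<partial>density lborel (\<lambda>x. ennreal (hh N R x)))" by (simp only: dm)
    also have "... = (LINT r|lborel. k r)" unfolding k_def using h_nn[OF R]
      by (subst integral_density) auto
    finally show ?thesis .
  qed
  have hout: "\<And>x. x \<notin> {0..2*R} \<Longrightarrow> hh N R x = 0" using h_out by auto
  have E2: "(LINT r|lborel. k r) = (LINT r:{0..\<zeta>}|lborel. k r) + (LINT r:{\<zeta><..2*R}|lborel. k r)"
  proof -
    have "(LINT r|lborel. k r) = (LINT r:{0..2*R}|lborel. k r)"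
      unfolding set_lebesgue_integral_def
      by (intro Bochner_Integration.integral_cong) (use hout in \<open>auto simp: indicator_def k_def\<close>)
    also have "{0..2*R} = {0..\<zeta>} \<union> {\<zeta><..2*R}" using \<zeta> by auto
    also have "(LINT r:{0..\<zeta>} \<union> {\<zeta><..2*R}|lborel. k r) = (LINT r:{0..\<zeta>}|lborel. k r) + (LINT r:{\<zeta><..2*R}|lborel. k r)"
      by (rule set_integral_Un) (auto intro!: sik)
    finally show ?thesis .
  qed
  have E3: "(LINT r:{0..\<zeta>}|lborel. k r) = real N * Po * (LBINT r=0..\<zeta>. r powr c * g r)"
  proof -
    have "(LINT r:{0..\<zeta>}|lborel. k r) = (LINT r:{0..\<zeta>}|lborel. (real N * Po) * (r powr c * g r))"
    proof (rule set_lebesgue_integral_cong)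
      show "\<forall>r. r \<in> {0..\<zeta>} \<longrightarrow> k r = (real N * Po) * (r powr c * g r)"
      proof (intro allI impI)
        fix r assume r: "r \<in> {0..\<zeta>}"
        then have "r \<le> (Pmax / Po) powr (1/c)" by (auto simp: \<zeta>_def)
        then have "r powr c \<le> Pmax / Po" using r c assms by (subst powr_le_iff_root) auto
        then have "Po * r powr c \<le> Pmax" using assms by (simp add: pos_le_divide_eq mult.commute)
        then show "k r = (real N * Po) * (r powr c * g r)" by (simp add: k_def \<phi>_def hg)
      qed
    qed auto
    also have "... = real N * Po * (LINT r:{0..\<zeta>}|lborel. r powr c * g r)" by simp
    also have "(LINT r:{0..\<zeta>}|lborel. r powr c * g r) = (LBINT r=0..\<zeta>. r powr c * g r)"
      using interval_integral_Icc[of 0 \<zeta> "\<lambda>r. r powr c * g r"] \<zeta> by (simp add: zero_ereal_def)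
    finally show ?thesis .
  qed
  have E4: "(LINT r:{\<zeta><..2*R}|lborel. k r) = real N * Pmax * (LBINT r=\<zeta>..2*R. g r)"
  proof -
    have "(LINT r:{\<zeta><..2*R}|lborel. k r) = (LINT r:{\<zeta><..2*R}|lborel. (real N * Pmax) * g r)"
    proof (rule set_lebesgue_integral_cong)
      show "\<forall>r. r \<in> {\<zeta><..2*R} \<longrightarrow> k r = (real N * Pmax) * g r"
      proof (intro allI impI)
        fix r assume r: "r \<in> {\<zeta><..2*R}"
        then have z: "\<zeta> = (Pmax / Po) powr (1/c)" by (auto simp: \<zeta>_def min_def split: if_splits)
        have r0: "0 \<le> r" using r \<zeta> by auto
        have "\<not> r \<le> (Pmax / Po) powr (1/c)" using r z by auto
        then have "\<not> r powr c \<le> Pmax / Po" using r0 c assms by (subst powr_le_iff_root) auto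
        then have "\<not> Po * r powr c \<le> Pmax" using assms by (simp add: pos_le_divide_eq mult.commute)
        then show "k r = (real N * Pmax) * g r" by (simp add: k_def \<phi>_def hg)
      qed
    qed auto
    also have "... = real N * Pmax * (LINT r:{\<zeta><..2*R}|lborel. g r)" by simp
    also have "(LINT r:{\<zeta><..2*R}|lborel. g r) = (LBINT r=\<zeta>..2*R. g r)"
      using interval_integral_Ioc[of \<zeta> "2*R" g] \<zeta> by simp
    finally show ?thesis .
  qed
  have E1: "(\<integral>x. \<phi> (m x) \<partial>M) = real N * (Pmax * (LBINT r=\<zeta>..2 * R. g r) + Po * (LBINT r=0..\<zeta>. r powr c * g r))"
    unfolding E0 E2 E3 E4 by (simp add: algebra_simps)
  have E: "(\<integral>x. Pcp + \<phi> (m x) / \<eta> \<partial>M) = Pcp + (1 / \<eta>) * real N * (Pmax * (LBINT r=\<zeta>..2 * R. g r) + Po * (LBINT r=0..\<zeta>. r powr c * g r))"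
  proof -
    have "(\<integral>x. Pcp + \<phi> (m x) / \<eta> \<partial>M) = (\<integral>x. Pcp \<partial>M) + (\<integral>x. \<phi> (m x) / \<eta> \<partial>M)"
      by (rule Bochner_Integration.integral_add) (use intM in auto)
    also have "... = Pcp + (\<integral>x. \<phi> (m x) \<partial>M) / \<eta>" by (simp add: prob_space)
    finally show ?thesis unfolding E1 by simp
  qed

  have C1: "cov = HH N R b"
  proof -
    have S[measurable]: "{r::real. Lo * r powr \<alpha>g \<le> \<mu>} \<in> sets borel" by measurable
    have "cov = measure M (m -` {r::real. Lo * r powr \<alpha>g \<le> \<mu>} \<inter> space M)"
      unfolding cov_def by (intro arg_cong[where f=prob]) auto
    also have "... = measure (distr M borel m) {r::real. Lo * r powr \<alpha>g \<le> \<mu>}"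
      by (rule measure_distr[symmetric]) auto
    also have "... = enn2real (\<integral>\<^sup>+r. ennreal (hh N R r) * indicator {r::real. Lo * r powr \<alpha>g \<le> \<mu>} r \<partial>lborel)"
      unfolding dm measure_def by (subst emeasure_density) auto
    also have "... = enn2real (\<integral>\<^sup>+r. ennreal (hh N R r) * indicator {..b} r \<partial>lborel)"
    proof (intro arg_cong[where f=enn2real] nn_integral_cong)
      fix r :: real
      show "ennreal (hh N R r) * indicator {r::real. Lo * r powr \<alpha>g \<le> \<mu>} r = ennreal (hh N R r) * indicator {..b} r"
      proof (cases "r < 0 \<or> r > 2*R")
        case True then show ?thesis by (simp add: h_out)
      next
        case False
        then have r: "0 \<le> r" "r \<le> 2*R" by auto
        have "Lo * r powr \<alpha>g \<le> \<mu> \<longleftrightarrow> r powr \<alpha>g \<le> \<mu> / Lo"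
          using assms by (simp add: pos_le_divide_eq mult.commute)
        also have "... \<longleftrightarrow> r \<le> (\<mu> / Lo) powr (1/\<alpha>g)"
          by (rule powr_le_iff_root) (use r assms in auto)
        also have "... \<longleftrightarrow> r \<le> b" using r by (auto simp: b_def)
        finally show ?thesis by (simp add: indicator_def)
      qed
    qed
    also have "... = HH N R b" using H_nn[OF R, of N b] H_nonneg[OF R, of N b] by simp
    finally show ?thesis .
  qed
  have C2: "HH N R b = real N * (LBINT r=0..b. g r)"
  proof -
    have "(LBINT r=0..b. hh N R r) = HH N R b - HH N R 0" using H_int(2)[of R 0 b N] R b by (simp add: zero_ereal_def)
    then show ?thesis by (simp add: H_0 hg)
  qed
  have C3: "N = 1 \<longrightarrow> cov = min (Psi_CI R b) 1"
    using C1 F_bounds[OF R, of b] by (auto simp: HH_def)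
  show ?thesis
    using E C1 C2 C3
    unfolding Let_def m_def \<phi>_def c_def \<zeta>_def b_def cov_def g_def
    by (simp add: mult.assoc)
qed

end
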